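(* Let $\rho$ and $\sigma$ be positive definite density matrices on a $d$-dimensional complex Hilbert space, and let $\alpha>1$. Define the R\'enyi relative entropy $D_\alpha(\rho\|\sigma)=\frac{1}{\alpha-1}\log\mathrm{tr}\,[\rho^\alpha\sigma^{1-\alpha}]$. Then \[ D_\alpha(\rho\|\sigma)\ \ge\ \frac{1}{\alpha-1}\Big(\log d+\frac{\alpha}{d}\log\det(\rho)+\frac{1-\alpha}{d}\log\det(\sigma)\Big). \]
   Context: A density matrix is a Hermitian positive semidefinite matrix with trace $1$. Real powers of positive definite matrices are defined by functional calculus. $\log$ denotes the logarithm to a fixed base greater than $1$. *)

theory Defs
  imports Complex_Main "Jordan_Normal_Form.Matrix" "Jordan_Normal_Form.Determinant"
begin

definition adj :: "complex mat \<Rightarrow> complex mat" where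
  "adj A = mat (dim_col A) (dim_row A) (\<lambda>(i,j). cnj (A $$ (j,i)))"

definition mtrace :: "complex mat \<Rightarrow> complex" where
  "mtrace A = (\<Sum>i<dim_row A. A $$ (i,i))"

definition hermitian :: "nat \<Rightarrow> complex mat \<Rightarrow> bool" where
  "hermitian n A \<longleftrightarrow> A \<in> carrier_mat n n \<and> adj A = A"

definition qform :: "complex mat \<Rightarrow> complex vec \<Rightarrow> complex" where
  "qform A v = (\<Sum>i<dim_vec v. cnj (v $ i) * (A *\<^sub>v v) $ i)"

definition pos_semidef :: "nat \<Rightarrow> complex mat \<Rightarrow> bool" where
  "pos_semidef n A \<longleftrightarrow> hermitian n A \<and>
     (\<forall>v \<in> carrier_vec n. Im (qform A v) = 0 \<and> Re (qform A v) \<ge> 0)"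

definition pos_def :: "nat \<Rightarrow> complex mat \<Rightarrow> bool" where
  "pos_def n A \<longleftrightarrow> hermitian n A \<and>
     (\<forall>v \<in> carrier_vec n. v \<noteq> 0\<^sub>v n \<longrightarrow> Im (qform A v) = 0 \<and> Re (qform A v) > 0)"

definition density_matrix :: "nat \<Rightarrow> complex mat \<Rightarrow> bool" where
  "density_matrix n A \<longleftrightarrow> pos_semidef n A \<and> mtrace A = 1"

definition unitary :: "nat \<Rightarrow> complex mat \<Rightarrow> bool" where
  "unitary n U \<longleftrightarrow> U \<in> carrier_mat n n \<and> adj U * U = 1\<^sub>m n"

text \<open>Real power of a positive definite matrix by functional calculus:
  if A = U diag(l) U^* with U unitary and l > 0, then A powr p = U diag(l powr p) U^*
  (independent of the chosen spectral decomposition).\<close>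
definition mat_powr :: "complex mat \<Rightarrow> real \<Rightarrow> complex mat" where
  "mat_powr A p = (SOME B. \<exists>U l. unitary (dim_row A) U \<and> (\<forall>i<dim_row A. l i > (0::real)) \<and>
      A = U * mat_diag (dim_row A) (\<lambda>i. complex_of_real (l i)) * adj U \<and>
      B = U * mat_diag (dim_row A) (\<lambda>i. complex_of_real (l i powr p)) * adj U)"

text \<open>Renyi relative entropy with logarithm to base b; the trace is real (positive),
  so we take its real part.\<close>
definition renyi :: "real \<Rightarrow> real \<Rightarrow> complex mat \<Rightarrow> complex mat \<Rightarrow> real" where
  "renyi b \<alpha> \<rho> \<sigma> = 1 / (\<alpha> - 1) * log b (Re (mtrace (mat_powr \<rho> \<alpha> * mat_powr \<sigma> (1 - \<alpha>))))"

end

theory Submission imports Defs "Jordan_Normal_Form.Spectral_Radius"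
begin

lemma sq_mult_carrier[simp]: "A \<in> carrier_mat n n \<Longrightarrow> B \<in> carrier_mat n n \<Longrightarrow> A * B \<in> carrier_mat n n"
  by (rule mult_carrier_mat)

lemma mat_diag_dims[simp]: "dim_row (mat_diag n f) = n" "dim_col (mat_diag n f) = n"
  unfolding mat_diag_def by auto

lemma adj_carrier[simp]: "A \<in> carrier_mat n m \<Longrightarrow> adj A \<in> carrier_mat m n"
  unfolding adj_def by auto
lemma adj_dims[simp]: "dim_row (adj A) = dim_col A" "dim_col (adj A) = dim_row A"
  unfolding adj_def by auto
lemma adj_index[simp]: "i < dim_col A \<Longrightarrow> j < dim_row A \<Longrightarrow> adj A $$ (i,j) = cnj (A $$ (j,i))"
  unfolding adj_def by auto
lemma adj_adj[simp]: "adj (adj A) = A"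
  by (rule eq_matI, auto)
lemma adj_mult: assumes "A \<in> carrier_mat n m" "B \<in> carrier_mat m k"
  shows "adj (A * B) = adj B * adj A"
  apply (rule eq_matI) using assms by (auto simp: scalar_prod_def intro!: sum.cong)
lemma adj_one[simp]: "adj (1\<^sub>m n) = 1\<^sub>m n"
  by (rule eq_matI, auto)
lemma adj_diag_real: "adj (mat_diag n (\<lambda>i. complex_of_real (l i))) = mat_diag n (\<lambda>i. complex_of_real (l i))"
  by (rule eq_matI, auto simp: mat_diag_def)

lemma unitary_right: assumes "unitary n U" shows "U * adj U = 1\<^sub>m n"
  using assms mat_mult_left_right_inverse[of "adj U" n U] unfolding unitary_def by auto

lemma unitary_mult: assumes "unitary n U" "unitary n V" shows "unitary n (U * V)"
proof -
  have U: "U \<in> carrier_mat n n" and V: "V \<in> carrier_mat n n" using assms unfolding unitary_def by auto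
  have "adj (U * V) * (U * V) = adj V * ((adj U * U) * V)"
    using U V by (simp add: adj_mult[OF U V] assoc_mult_mat[of _ n n _ n _ n])
  also have "\<dots> = 1\<^sub>m n" using assms V unfolding unitary_def by simp
  finally show ?thesis using U V unfolding unitary_def by auto
qed

lemma unitary_normalize:
  fixes ws :: "complex vec list"
  assumes ws: "set ws \<subseteq> carrier_vec n" "corthogonal ws" "length ws = n"
  defines "s \<equiv> \<lambda>i. sqrt (\<Sum>k<n. (cmod (ws!i$k))^2)"
  defines "W \<equiv> mat n n (\<lambda>(k,i). ws!i$k / complex_of_real (s i))"
  shows "unitary n W" "\<And>i. i < n \<Longrightarrow> s i > 0"
proof -
  have sq: "ws!i \<bullet>c ws!i = complex_of_real ((s i)^2)" if "i < n" for i
  proof -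
    have d: "dim_vec (ws!i) = n" using ws that by (auto dest!: nth_mem)
    have "ws!i \<bullet>c ws!i = (\<Sum>k<n. ws!i$k * cnj (ws!i$k))"
      by (simp add: scalar_prod_def d lessThan_atLeast0)
    also have "\<dots> = complex_of_real (\<Sum>k<n. (cmod (ws!i$k))^2)"
      by (simp only: of_real_sum complex_norm_square)
    also have "(\<Sum>k<n. (cmod (ws!i$k))^2) = (s i)^2" unfolding s_def
      by (simp add: sum_nonneg)
    finally show ?thesis .
  qed
  show pos: "s i > 0" if "i < n" for i
  proof -
    have "ws!i \<bullet>c ws!i \<noteq> 0" using corthogonalD[OF ws(2), of i i] ws(3) that by auto
    hence "s i \<noteq> 0" using sq[OF that] by auto
    moreover have "s i \<ge> 0" unfolding s_def by (simp add: sum_nonneg)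
    ultimately show ?thesis by simp
  qed
  have W: "W \<in> carrier_mat n n" unfolding W_def by auto
  have "adj W * W = 1\<^sub>m n"
  proof (rule eq_matI)
    fix i j assume i: "i < dim_row (1\<^sub>m n)" and j: "j < dim_col (1\<^sub>m n)"
    hence i: "i < n" and j: "j < n" by auto
    have dj: "dim_vec (ws!i) = n" using ws i by (auto dest!: nth_mem)
    have "(adj W * W) $$ (i,j) = (\<Sum>k<n. cnj (ws!i$k / complex_of_real (s i)) * (ws!j$k / complex_of_real (s j)))"
      using i j W by (simp add: scalar_prod_def W_def lessThan_atLeast0)
    also have "\<dots> = (ws!j \<bullet>c ws!i) / (complex_of_real (s i) * complex_of_real (s j))"
      by (simp add: scalar_prod_def dj lessThan_atLeast0 sum_divide_distrib mult.commute)
    also have "\<dots> = 1\<^sub>m n $$ (i,j)"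
    proof (cases "i = j")
      case True
      thus ?thesis using sq[OF i] pos[OF i] i by (simp add: power2_eq_square)
    next
      case False
      thus ?thesis using corthogonalD[OF ws(2), of j i] ws(3) i j by auto
    qed
    finally show "(adj W * W) $$ (i,j) = 1\<^sub>m n $$ (i,j)" .
  qed (use W in auto)
  thus "unitary n W" using W unfolding unitary_def by auto
qed

lemma hermitian_decomp:
  assumes "hermitian n A"
  shows "\<exists>U l. unitary n U \<and> A = U * mat_diag n (\<lambda>i. complex_of_real (l i)) * adj U"
  using assms
proof (induction n arbitrary: A)
  case 0
  hence A: "A \<in> carrier_mat 0 0" unfolding hermitian_def by auto
  have "unitary 0 (1\<^sub>m 0)" unfolding unitary_def by auto
  moreover have "A = 1\<^sub>m 0 * mat_diag 0 (\<lambda>i. complex_of_real ((\<lambda>_. 0) i)) * adj (1\<^sub>m 0)"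
    by (rule eq_matI, use A in auto)
  ultimately show ?case by (intro exI[of _ "1\<^sub>m 0"] exI[of _ "\<lambda>_::nat. 0::real"]) auto
next
  case (Suc n)
  let ?N = "Suc n"
  have A: "A \<in> carrier_mat ?N ?N" and hA: "adj A = A" using Suc.prems unfolding hermitian_def by auto
  from spectrum_non_empty[OF A] obtain e where "eigenvalue A e" unfolding spectrum_def by auto
  then obtain v where ev: "eigenvector A v e" unfolding eigenvalue_def by auto
  hence v: "v \<in> carrier_vec ?N" "v \<noteq> 0\<^sub>v ?N" "A *\<^sub>v v = e \<cdot>\<^sub>v v" using A unfolding eigenvector_def by auto
  interpret cof_vec_space ?N "TYPE(complex)" .
  define b where "b = basis_completion v"
  from basis_completion[OF v(1) v(2), folded b_def]
  have b: "set b \<subseteq> carrier_vec ?N" "distinct b" "\<not> lin_dep (set b)" "hd b = v" "length b = ?N" by auto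
  then obtain vs where bv: "b = v # vs" by (cases b, auto)
  define ws where "ws = gram_schmidt ?N b"
  from gram_schmidt_result[OF b(1) b(2) b(3) ws_def]
  have ws: "set ws \<subseteq> carrier_vec ?N" "corthogonal ws" "length ws = ?N" using b(5) by auto
  have hd: "hd ws = v" unfolding ws_def bv using v(1) by simp
  hence ws0: "ws ! 0 = v" using ws(3) by (cases ws, auto)
  define s where "s = (\<lambda>i. sqrt (\<Sum>k<?N. (cmod (ws!i$k))^2))"
  define W where "W = mat ?N ?N (\<lambda>(k,i). ws!i$k / complex_of_real (s i))"
  have uW: "unitary ?N W" unfolding W_def s_def by (rule unitary_normalize(1)[OF ws])
  have s0: "s 0 > 0" unfolding s_def by (rule unitary_normalize(2)[OF ws], simp)
  have W[simp]: "W \<in> carrier_mat ?N ?N" unfolding W_def by auto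
  have Wd[simp]: "dim_row W = ?N" "dim_col W = ?N" "dim_row A = ?N" "dim_col A = ?N" using A unfolding W_def by auto
  have aW[simp]: "adj W \<in> carrier_mat ?N ?N" using adj_carrier[OF W] .
  have WW: "adj W * W = 1\<^sub>m ?N" using uW unfolding unitary_def by auto
  have WW': "W * adj W = 1\<^sub>m ?N" using unitary_right[OF uW] .
  have colW: "col W 0 = (1 / complex_of_real (s 0)) \<cdot>\<^sub>v v"
    unfolding W_def by (rule eq_vecI, use v(1) ws0 in auto)
  define A' where "A' = adj W * A * W"
  have A'[simp]: "A' \<in> carrier_mat ?N ?N" unfolding A'_def by (meson mult_carrier_mat aW A W)
  have A'd[simp]: "dim_row A' = ?N" "dim_col A' = ?N" using A' by (auto simp del: A')
  have hA': "adj A' = A'"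
  proof -
    have "adj A' = adj W * adj (adj W * A)" unfolding A'_def
      by (rule adj_mult[of _ ?N ?N _ ?N], use A in auto)
    also have "adj (adj W * A) = adj A * W"
      by (subst adj_mult[of _ ?N ?N _ ?N], use A in auto)
    finally show ?thesis unfolding A'_def hA using A by (simp add: assoc_mult_mat[of _ ?N ?N _ ?N _ ?N])
  qed
  have col0: "A' $$ (i,0) = (if i = 0 then e else 0)" if i: "i < ?N" for i
  proof -
    have "col (A * W) 0 = A *\<^sub>v col W 0" by (rule col_mult2[OF A W], simp)
    also have "\<dots> = e \<cdot>\<^sub>v col W 0" unfolding colW using v A
      by (simp add: mult_mat_vec smult_smult_assoc mult.commute)
    finally have c: "col (A * W) 0 = e \<cdot>\<^sub>v col W 0" .
    have "A' $$ (i,0) = (adj W * (A * W)) $$ (i,0)" unfolding A'_def using A by (simp add: assoc_mult_mat[of _ ?N ?N _ ?N _ ?N])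
    also have "\<dots> = row (adj W) i \<bullet> col (A * W) 0" using i A by simp
    also have "\<dots> = e * (row (adj W) i \<bullet> col W 0)" unfolding c using i by simp
    also have "row (adj W) i \<bullet> col W 0 = (adj W * W) $$ (i,0)" using i by simp
    also have "\<dots> = (if i = 0 then 1 else 0)" unfolding WW using i by simp
    finally show ?thesis by simp
  qed
  have row0: "A' $$ (0,j) = (if j = 0 then cnj e else 0)" if j: "j < ?N" for j
  proof -
    have "A' $$ (0,j) = adj A' $$ (0,j)" using hA' by simp
    also have "\<dots> = cnj (A' $$ (j,0))" using j by simp
    finally show ?thesis using col0[OF j] by simp
  qed
  have "cnj e = e" using row0[of 0] col0[of 0] by simp
  hence ereal: "e = complex_of_real (Re e)" by (simp add: complex_eq_iff)
  define A3 where "A3 = mat n n (\<lambda>(i,j). A' $$ (Suc i, Suc j))"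
  have hA3: "hermitian n A3" unfolding hermitian_def
  proof
    show "A3 \<in> carrier_mat n n" unfolding A3_def by auto
    show "adj A3 = A3"
    proof (rule eq_matI)
      fix i j assume "i < dim_row A3" "j < dim_col A3"
      hence i: "i < n" and j: "j < n" unfolding A3_def by auto
      have "adj A3 $$ (i,j) = cnj (A' $$ (Suc j, Suc i))" using i j unfolding A3_def by simp
      also have "\<dots> = adj A' $$ (Suc i, Suc j)" using i j by simp
      also have "\<dots> = A3 $$ (i,j)" unfolding hA' using i j unfolding A3_def by simp
      finally show "adj A3 $$ (i,j) = A3 $$ (i,j)" .
    qed (auto simp: A3_def)
  qed
  from Suc.IH[OF hA3] obtain U3 l3 where U3: "unitary n U3"
    and A3eq: "A3 = U3 * mat_diag n (\<lambda>i. complex_of_real (l3 i)) * adj U3" by blast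
  have U3c[simp]: "U3 \<in> carrier_mat n n" using U3 unfolding unitary_def by auto
  have U3d[simp]: "dim_row U3 = n" "dim_col U3 = n" using U3c by (auto simp del: U3c)
  define U' where "U' = four_block_mat (1\<^sub>m 1) (0\<^sub>m 1 n) (0\<^sub>m n 1) U3"
  define l where "l = (\<lambda>i. if i = 0 then Re e else l3 (i - 1))"
  have U'c[simp]: "U' \<in> carrier_mat ?N ?N" unfolding U'_def using four_block_carrier_mat[of "1\<^sub>m 1" 1 1 U3 n n] by auto
  have adjU': "adj U' = four_block_mat (1\<^sub>m 1) (0\<^sub>m 1 n) (0\<^sub>m n 1) (adj U3)"
    by (rule eq_matI, auto simp: U'_def)
  have "adj U' * U' = four_block_mat (1\<^sub>m 1) (0\<^sub>m 1 n) (0\<^sub>m n 1) (adj U3 * U3)"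
    unfolding adjU' unfolding U'_def by (subst mult_four_block_mat[of _ 1 1 _ n _ n _ _ 1 _ n], auto)
  hence uU': "unitary ?N U'" using U3 unfolding unitary_def by simp
  have Deq: "mat_diag ?N (\<lambda>i. complex_of_real (l i)) = four_block_mat (mat_diag 1 (\<lambda>_. e)) (0\<^sub>m 1 n) (0\<^sub>m n 1) (mat_diag n (\<lambda>i. complex_of_real (l3 i)))"
    by (rule eq_matI, auto simp: mat_diag_def l_def ereal[symmetric])
  have "U' * mat_diag ?N (\<lambda>i. complex_of_real (l i)) * adj U' = 
    four_block_mat (mat_diag 1 (\<lambda>_. e)) (0\<^sub>m 1 n) (0\<^sub>m n 1) (U3 * mat_diag n (\<lambda>i. complex_of_real (l3 i)) * adj U3)"
    unfolding Deq adjU' unfolding U'_def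
    apply (subst mult_four_block_mat[of _ 1 1 _ n _ n _ _ 1 _ n], auto)
    apply (subst mult_four_block_mat[of _ 1 1 _ n _ n _ _ 1 _ n])
    apply (auto simp: left_mult_zero_mat right_mult_zero_mat left_add_zero_mat right_add_zero_mat)
    done
  also have "\<dots> = A'"
  proof (rule eq_matI)
    fix i j assume "i < dim_row A'" "j < dim_col A'"
    hence i: "i < ?N" and j: "j < ?N" by auto
    show "four_block_mat (mat_diag 1 (\<lambda>_. e)) (0\<^sub>m 1 n) (0\<^sub>m n 1) (U3 * mat_diag n (\<lambda>i. complex_of_real (l3 i)) * adj U3) $$ (i, j) = A' $$ (i, j)"
      unfolding A3eq[symmetric] using i j col0[OF i] row0[OF j] ereal
      by (cases i; cases j; auto simp: A3_def mat_diag_def)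
  qed auto
  finally have A'eq: "A' = U' * mat_diag ?N (\<lambda>i. complex_of_real (l i)) * adj U'" by simp
  have "A = (W * adj W) * A * (W * adj W)" unfolding WW' using A by simp
  also have "\<dots> = W * A' * adj W" unfolding A'_def using A by (simp add: assoc_mult_mat[of _ ?N ?N _ ?N _ ?N])
  also have "\<dots> = (W * U') * mat_diag ?N (\<lambda>i. complex_of_real (l i)) * adj (W * U')"
    unfolding A'eq adj_mult[OF W U'c] by (simp add: assoc_mult_mat[of _ ?N ?N _ ?N _ ?N])
  finally show ?case using unitary_mult[OF uW uU'] by blast
qed

lemma pos_decomp:
  assumes "pos_def n A"
  shows "\<exists>U l. unitary n U \<and> (\<forall>i<n. l i > 0) \<and> A = U * mat_diag n (\<lambda>i. complex_of_real (l i)) * adj U"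
proof -
  have hA: "hermitian n A" using assms unfolding pos_def_def by auto
  from hermitian_decomp[OF hA] obtain U l where U: "unitary n U"
    and Aeq: "A = U * mat_diag n (\<lambda>i. complex_of_real (l i)) * adj U" by blast
  let ?D = "mat_diag n (\<lambda>i. complex_of_real (l i))"
  have Uc[simp]: "U \<in> carrier_mat n n" and UU: "adj U * U = 1\<^sub>m n" using U unfolding unitary_def by auto
  have Ud[simp]: "dim_row U = n" "dim_col U = n" using Uc by (auto simp del: Uc)
  have aU[simp]: "adj U \<in> carrier_mat n n" by simp
  have AU: "A * U = U * ?D"
  proof -
    have "A * U = U * ?D * (adj U * U)" unfolding Aeq
      by (simp add: assoc_mult_mat[of _ n n _ n _ n])
    thus ?thesis unfolding UU by simp
  qed
  have "l i > 0" if i: "i < n" for i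
  proof -
    define v where "v = col U i"
    have v: "v \<in> carrier_vec n" unfolding v_def using col_dim[of U i] by simp
    have dv: "dim_vec v = n" unfolding v_def by simp
    have Av: "A *\<^sub>v v = complex_of_real (l i) \<cdot>\<^sub>v v"
    proof -
      have "A *\<^sub>v v = col (A * U) i" unfolding v_def
        by (rule col_mult2[symmetric, of _ n n _ n], use i Aeq in auto)
      also have "\<dots> = col (U * ?D) i" unfolding AU ..
      also have "\<dots> = complex_of_real (l i) \<cdot>\<^sub>v v" unfolding v_def
        by (subst mat_diag_mult_right[of _ n], simp, rule eq_vecI, use i in auto)
      finally show ?thesis .
    qed
    have n1: "(\<Sum>k<n. cnj (v$k) * v$k) = 1"
    proof -
      have "(adj U * U) $$ (i,i) = 1" unfolding UU using i by simp
      moreover have "(adj U * U) $$ (i,i) = (\<Sum>k<n. cnj (v$k) * v$k)"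
        using i by (simp add: scalar_prod_def v_def lessThan_atLeast0)
      ultimately show ?thesis by simp
    qed
    have "v \<noteq> 0\<^sub>v n" using n1 by auto
    hence pos: "Re (qform A v) > 0" using assms v unfolding pos_def_def by auto
    have "qform A v = (\<Sum>k<n. cnj (v$k) * (complex_of_real (l i) * v$k))"
      unfolding qform_def Av dv using dv by simp
    also have "\<dots> = complex_of_real (l i) * (\<Sum>k<n. cnj (v$k) * v$k)"
      by (simp add: sum_distrib_left algebra_simps)
    finally have "qform A v = complex_of_real (l i)" unfolding n1 by simp
    thus ?thesis using pos by simp
  qed
  thus ?thesis using U Aeq by blast
qed

lemma powr_decomp:
  assumes "pos_def n A"
  shows "\<exists>U l. unitary n U \<and> (\<forall>i<n. l i > 0) \<and> A = U * mat_diag n (\<lambda>i. complex_of_real (l i)) * adj U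
     \<and> mat_powr A p = U * mat_diag n (\<lambda>i. complex_of_real (l i powr p)) * adj U"
proof -
  have dA: "dim_row A = n" using assms unfolding pos_def_def hermitian_def by auto
  let ?P = "\<lambda>B. \<exists>U l. unitary n U \<and> (\<forall>i<n. l i > (0::real)) \<and>
      A = U * mat_diag n (\<lambda>i. complex_of_real (l i)) * adj U \<and>
      B = U * mat_diag n (\<lambda>i. complex_of_real (l i powr p)) * adj U"
  from pos_decomp[OF assms] obtain U l where "unitary n U" "\<forall>i<n. l i > 0"
    "A = U * mat_diag n (\<lambda>i. complex_of_real (l i)) * adj U" by blast
  hence "?P (U * mat_diag n (\<lambda>i. complex_of_real (l i powr p)) * adj U)" by blast
  hence "?P (SOME B. ?P B)" by (rule someI)
  hence "?P (mat_powr A p)" unfolding mat_powr_def dA .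
  thus ?thesis by blast
qed

lemma det_decomp:
  assumes U: "unitary n U"
  shows "det (U * mat_diag n (\<lambda>i. complex_of_real (l i)) * adj U) = complex_of_real (\<Prod>i<n. l i)"
proof -
  let ?D = "mat_diag n (\<lambda>i. complex_of_real (l i))"
  have Uc[simp]: "U \<in> carrier_mat n n" and UU: "adj U * U = 1\<^sub>m n" using U unfolding unitary_def by auto
  have "det (U * ?D * adj U) = det U * det ?D * det (adj U)"
    by (simp add: det_mult[of _ n])
  also have "\<dots> = det ?D * (det (adj U) * det U)" by simp
  also have "det (adj U) * det U = 1" using det_mult[of "adj U" n U] UU by simp
  also have "det ?D = prod_list (diag_mat ?D)"
    by (rule det_upper_triangular[of _ n], auto simp: upper_triangular_def mat_diag_def)
  also have "\<dots> = (\<Prod>i<n. complex_of_real (l i))"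
    by (simp add: diag_mat_def mat_diag_def prod.distinct_set_conv_list[symmetric] atLeast0LessThan)
  finally show ?thesis by simp
qed

lemma mtrace_comm:
  assumes A: "A \<in> carrier_mat n m" and B: "B \<in> carrier_mat m n"
  shows "mtrace (A * B) = mtrace (B * A)"
proof -
  have "mtrace (A * B) = (\<Sum>i<n. \<Sum>k<m. A $$ (i,k) * B $$ (k,i))"
    unfolding mtrace_def using A B by (simp add: scalar_prod_def lessThan_atLeast0)
  also have "\<dots> = (\<Sum>k<m. \<Sum>i<n. B $$ (k,i) * A $$ (i,k))"
    by (subst sum.swap, simp add: mult.commute)
  also have "\<dots> = mtrace (B * A)"
    unfolding mtrace_def using A B by (simp add: scalar_prod_def lessThan_atLeast0)
  finally show ?thesis .
qed

lemma trace_formula: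
  assumes U: "unitary n U" and V: "unitary n V"
  defines "W \<equiv> adj U * V"
  shows "Re (mtrace ((U * mat_diag n (\<lambda>i. complex_of_real (a i)) * adj U) * (V * mat_diag n (\<lambda>i. complex_of_real (b i)) * adj V)))
    = (\<Sum>i<n. \<Sum>j<n. a i * b j * (cmod (W $$ (i,j)))^2)"
proof -
  let ?Da = "mat_diag n (\<lambda>i. complex_of_real (a i))"
  let ?Db = "mat_diag n (\<lambda>i. complex_of_real (b i))"
  have Uc[simp]: "U \<in> carrier_mat n n" and Vc[simp]: "V \<in> carrier_mat n n" using U V unfolding unitary_def by auto
  have Wc[simp]: "W \<in> carrier_mat n n" unfolding W_def by simp
  have Wd[simp]: "dim_row W = n" "dim_col W = n" using Wc by (auto simp del: Wc)
  have aW: "adj W = adj V * U" unfolding W_def by (simp add: adj_mult[of _ n n _ n])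
  have "(U * ?Da * adj U) * (V * ?Db * adj V) = U * (?Da * adj U * V * ?Db * adj V)"
    by (simp add: assoc_mult_mat[of _ n n _ n _ n])
  hence "mtrace ((U * ?Da * adj U) * (V * ?Db * adj V)) = mtrace ((?Da * adj U * V * ?Db * adj V) * U)"
    using mtrace_comm[of U n n] by simp
  also have "(?Da * adj U * V * ?Db * adj V) * U = ?Da * (W * ?Db * adj W)"
    unfolding aW unfolding W_def by (simp add: assoc_mult_mat[of _ n n _ n _ n])
  also have "mtrace (?Da * (W * ?Db * adj W)) = (\<Sum>i<n. complex_of_real (a i) * (\<Sum>j<n. W $$ (i,j) * complex_of_real (b j) * cnj (W $$ (i,j))))"
    unfolding mtrace_def
    by (subst mat_diag_mult_left[of _ n n], simp, subst mat_diag_mult_right[of _ n], simp,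
        simp add: scalar_prod_def lessThan_atLeast0)
  also have "\<dots> = complex_of_real (\<Sum>i<n. \<Sum>j<n. a i * b j * (cmod (W $$ (i,j)))^2)"
  proof -
    have "W $$ (i,j) * complex_of_real (b j) * cnj (W $$ (i,j)) = complex_of_real (b j * (cmod (W $$ (i,j)))^2)" for i j
    proof -
      have sq: "W $$ (i,j) * cnj (W $$ (i,j)) = complex_of_real ((cmod (W $$ (i,j)))^2)"
        by (simp only: complex_norm_square)
      have "W $$ (i,j) * complex_of_real (b j) * cnj (W $$ (i,j)) = complex_of_real (b j) * (W $$ (i,j) * cnj (W $$ (i,j)))"
        by (simp add: mult_ac)
      also have "\<dots> = complex_of_real (b j) * complex_of_real ((cmod (W $$ (i,j)))^2)" by (simp only: sq)
      also have "\<dots> = complex_of_real (b j * (cmod (W $$ (i,j)))^2)" by (simp only: of_real_mult)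
      finally show ?thesis .
    qed
    note e = this
    have "(\<Sum>i<n. complex_of_real (a i) * (\<Sum>j<n. W $$ (i,j) * complex_of_real (b j) * cnj (W $$ (i,j))))
      = (\<Sum>i<n. \<Sum>j<n. complex_of_real (a i * (b j * (cmod (W $$ (i,j)))^2)))"
      by (intro sum.cong refl, simp only: sum_distrib_left e of_real_mult)
    also have "\<dots> = complex_of_real (\<Sum>i<n. \<Sum>j<n. a i * b j * (cmod (W $$ (i,j)))^2)"
      by (simp only: of_real_sum mult.assoc)
    finally show ?thesis .
  qed
  finally show ?thesis by simp
qed

lemma ln_sum_ge:
  fixes w x :: "'a \<Rightarrow> real"
  assumes S: "finite S" and w: "\<And>k. k \<in> S \<Longrightarrow> w k \<ge> 0" and sw: "sum w S = 1"
    and x: "\<And>k. k \<in> S \<Longrightarrow> x k > 0"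
  shows "(\<Sum>k\<in>S. w k * ln (x k)) \<le> ln (\<Sum>k\<in>S. w k * x k)"
proof -
  define L where "L = (\<Sum>k\<in>S. w k * ln (x k))"
  have "w k * (ln (x k) - L) \<le> w k * (x k * exp (- L) - 1)" if k: "k \<in> S" for k
  proof -
    have "ln (x k * exp (-L)) \<le> x k * exp (-L) - 1" by (rule ln_le_minus_one, use x[OF k] in simp)
    hence "ln (x k) - L \<le> x k * exp (-L) - 1" using x[OF k] by (simp add: ln_mult)
    thus ?thesis using w[OF k] by (rule mult_left_mono)
  qed
  hence "(\<Sum>k\<in>S. w k * (ln (x k) - L)) \<le> (\<Sum>k\<in>S. w k * (x k * exp (- L) - 1))" by (rule sum_mono)
  moreover have "(\<Sum>k\<in>S. w k * (ln (x k) - L)) = L - sum w S * L"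
    unfolding right_diff_distrib sum_subtractf L_def[symmetric] by (simp add: sum_distrib_right)
  moreover have "(\<Sum>k\<in>S. w k * (x k * exp (- L) - 1)) = exp (-L) * (\<Sum>k\<in>S. w k * x k) - sum w S"
    unfolding right_diff_distrib sum_subtractf by (simp add: sum_distrib_left mult.commute mult.left_commute)
  ultimately have "L - sum w S * L \<le> exp (-L) * (\<Sum>k\<in>S. w k * x k) - sum w S" by simp
  hence le: "1 \<le> exp (-L) * (\<Sum>k\<in>S. w k * x k)" using sw by simp
  hence "exp L \<le> exp L * (exp (-L) * (\<Sum>k\<in>S. w k * x k))" by simp
  also have "\<dots> = (\<Sum>k\<in>S. w k * x k)" by (simp add: exp_minus field_simps)
  finally have "exp L \<le> (\<Sum>k\<in>S. w k * x k)" .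
  thus ?thesis unfolding L_def by (metis exp_gt_zero ln_exp ln_le_cancel_iff order_less_le_trans)
qed

lemma unitary_adj: assumes "unitary n U" shows "unitary n (adj U)"
  using unitary_right[OF assms] assms unfolding unitary_def by auto

lemma unitary_sums:
  assumes W: "unitary n W" and i: "i < n"
  shows "(\<Sum>j<n. (cmod (W $$ (i,j)))^2) = 1" "(\<Sum>j<n. (cmod (W $$ (j,i)))^2) = 1"
proof -
  have Wc: "W \<in> carrier_mat n n" using W unfolding unitary_def by auto
  have Wd[simp]: "dim_row W = n" "dim_col W = n" using Wc by auto
  have sq: "complex_of_real ((cmod z)^2) = z * cnj z" for z by (simp only: complex_norm_square)
  have "(W * adj W) $$ (i,i) = 1" unfolding unitary_right[OF W] using i by simp
  moreover have "(W * adj W) $$ (i,i) = (\<Sum>j<n. W $$ (i,j) * cnj (W $$ (i,j)))"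
    using i by (simp add: scalar_prod_def lessThan_atLeast0)
  ultimately have "complex_of_real (\<Sum>j<n. (cmod (W $$ (i,j)))^2) = 1" by (simp only: of_real_sum sq)
  thus "(\<Sum>j<n. (cmod (W $$ (i,j)))^2) = 1" using of_real_eq_1_iff by blast
  have "(adj W * W) $$ (i,i) = 1" using W i unfolding unitary_def by simp
  moreover have "(adj W * W) $$ (i,i) = (\<Sum>j<n. W $$ (j,i) * cnj (W $$ (j,i)))"
    using i by (simp add: scalar_prod_def lessThan_atLeast0 mult.commute)
  ultimately have "complex_of_real (\<Sum>j<n. (cmod (W $$ (j,i)))^2) = 1" by (simp only: of_real_sum sq)
  thus "(\<Sum>j<n. (cmod (W $$ (j,i)))^2) = 1" using of_real_eq_1_iff by blast
qed

theorem mainTheorem5: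
  fixes \<rho> \<sigma> :: "complex mat" and d :: nat and \<alpha> b :: real
  assumes "b > 1"
    and "density_matrix d \<rho>" and "pos_def d \<rho>"
    and "density_matrix d \<sigma>" and "pos_def d \<sigma>"
    and "\<alpha> > 1"
  shows "renyi b \<alpha> \<rho> \<sigma> \<ge> 1 / (\<alpha> - 1) * (log b (real d)
           + \<alpha> / real d * log b (Re (det \<rho>))
           + (1 - \<alpha>) / real d * log b (Re (det \<sigma>)))"
proof -
  have d0: "d > 0"
  proof (rule ccontr)
    assume "\<not> d > 0"
    hence "d = 0" by simp
    moreover have "\<rho> \<in> carrier_mat d d" "mtrace \<rho> = 1" using assms(2)
      unfolding density_matrix_def pos_semidef_def hermitian_def by auto
    ultimately show False unfolding mtrace_def by simp
  qed
  from powr_decomp[OF assms(3), of \<alpha>] obtain U l where U: "unitary d U" and lpos: "\<forall>i<d. l i > 0"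
    and req: "\<rho> = U * mat_diag d (\<lambda>i. complex_of_real (l i)) * adj U"
    and rpow: "mat_powr \<rho> \<alpha> = U * mat_diag d (\<lambda>i. complex_of_real (l i powr \<alpha>)) * adj U" by blast
  from powr_decomp[OF assms(5), of "1 - \<alpha>"] obtain V m where V: "unitary d V" and mpos: "\<forall>i<d. m i > 0"
    and seq: "\<sigma> = V * mat_diag d (\<lambda>i. complex_of_real (m i)) * adj V"
    and spow: "mat_powr \<sigma> (1 - \<alpha>) = V * mat_diag d (\<lambda>i. complex_of_real (m i powr (1 - \<alpha>))) * adj V" by blast
  define W where "W = adj U * V"
  have uW: "unitary d W" unfolding W_def by (rule unitary_mult[OF unitary_adj[OF U] V])
  define P where "P = (\<lambda>i j. (cmod (W $$ (i,j)))^2)"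
  have rows: "(\<Sum>j<d. P i j) = 1" if "i < d" for i unfolding P_def using unitary_sums(1)[OF uW that] .
  have cols: "(\<Sum>i<d. P i j) = 1" if "j < d" for j unfolding P_def using unitary_sums(2)[OF uW that] .
  have Pnn: "P i j \<ge> 0" for i j unfolding P_def by simp
  define T where "T = Re (mtrace (mat_powr \<rho> \<alpha> * mat_powr \<sigma> (1 - \<alpha>)))"
  have T: "T = (\<Sum>i<d. \<Sum>j<d. l i powr \<alpha> * m j powr (1 - \<alpha>) * P i j)"
    unfolding T_def rpow spow trace_formula[OF U V] W_def[symmetric] P_def by (simp add: mult_ac)
  have detr: "Re (det \<rho>) = (\<Prod>i<d. l i)" unfolding req det_decomp[OF U] by (rule Re_complex_of_real)
  have dets: "Re (det \<sigma>) = (\<Prod>i<d. m i)" unfolding seq det_decomp[OF V] by (rule Re_complex_of_real)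
  define S where "S = {..<d} \<times> {..<d}"
  define w where "w = (\<lambda>(i,j). P i j / real d)"
  define x where "x = (\<lambda>(i,j). real d * (l i powr \<alpha> * m j powr (1 - \<alpha>)))"
  have sw: "sum w S = 1"
  proof -
    have "sum w S = (\<Sum>i<d. \<Sum>j<d. P i j / real d)" unfolding S_def w_def by (simp add: sum.cartesian_product)
    also have "\<dots> = (\<Sum>i<d. (\<Sum>j<d. P i j) / real d)" by (simp add: sum_divide_distrib)
    also have "\<dots> = (\<Sum>i<d. 1 / real d)" using rows by simp
    finally show ?thesis using d0 by simp
  qed
  have "(\<Sum>k\<in>S. w k * ln (x k)) \<le> ln (\<Sum>k\<in>S. w k * x k)"
  proof (rule ln_sum_ge)
    show "finite S" unfolding S_def by simp
    show "sum w S = 1" by (rule sw)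
    show "w k \<ge> 0" if "k \<in> S" for k unfolding w_def using Pnn by (auto split: prod.splits)
    show "x k > 0" if "k \<in> S" for k using that d0 lpos mpos unfolding S_def x_def by (auto split: prod.splits intro!: mult_pos_pos)
  qed
  moreover have "(\<Sum>k\<in>S. w k * x k) = T"
  proof -
    have "(\<Sum>k\<in>S. w k * x k) = (\<Sum>k\<in>S. case k of (i,j) \<Rightarrow> l i powr \<alpha> * m j powr (1 - \<alpha>) * P i j)"
      unfolding w_def x_def using d0 by (intro sum.cong refl) (auto split: prod.splits)
    also have "\<dots> = T" unfolding T S_def by (simp add: sum.cartesian_product)
    finally show ?thesis .
  qed
  moreover have "(\<Sum>k\<in>S. w k * ln (x k)) = ln (real d) + \<alpha> / real d * (\<Sum>i<d. ln (l i)) + (1 - \<alpha>) / real d * (\<Sum>j<d. ln (m j))"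
  proof -
    have "(\<Sum>k\<in>S. w k * ln (x k)) = (\<Sum>i<d. \<Sum>j<d. P i j / real d * (ln (real d) + \<alpha> * ln (l i) + (1 - \<alpha>) * ln (m j)))"
    proof -
      have "(\<Sum>k\<in>S. w k * ln (x k)) = (\<Sum>k\<in>S. case k of (i,j) \<Rightarrow> P i j / real d * (ln (real d) + \<alpha> * ln (l i) + (1 - \<alpha>) * ln (m j)))"
        unfolding w_def x_def S_def using d0 lpos mpos
        by (intro sum.cong refl) (auto split: prod.splits simp: ln_mult ln_powr)
      thus ?thesis unfolding S_def by (simp add: sum.cartesian_product)
    qed
    also have "\<dots> = (\<Sum>i<d. \<Sum>j<d. P i j / real d * ln (real d)) + (\<Sum>i<d. \<Sum>j<d. P i j / real d * (\<alpha> * ln (l i)))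
       + (\<Sum>i<d. \<Sum>j<d. P i j / real d * ((1 - \<alpha>) * ln (m j)))"
      by (simp add: distrib_left sum.distrib)
    also have "(\<Sum>i<d. \<Sum>j<d. P i j / real d * ln (real d)) = ln (real d)"
    proof -
      have "(\<Sum>i<d. \<Sum>j<d. P i j / real d * ln (real d)) = (\<Sum>i<d. (\<Sum>j<d. P i j) * (ln (real d) / real d))"
        by (simp add: sum_distrib_right sum_divide_distrib)
      also have "\<dots> = (\<Sum>i<d. ln (real d) / real d)" using rows by simp
      finally show ?thesis using d0 by simp
    qed
    also have "(\<Sum>i<d. \<Sum>j<d. P i j / real d * (\<alpha> * ln (l i))) = \<alpha> / real d * (\<Sum>i<d. ln (l i))"
    proof -
      have "(\<Sum>i<d. \<Sum>j<d. P i j / real d * (\<alpha> * ln (l i))) = (\<Sum>i<d. (\<Sum>j<d. P i j) * (\<alpha> / real d * ln (l i)))"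
        by (simp add: sum_distrib_right sum_divide_distrib)
      also have "\<dots> = (\<Sum>i<d. \<alpha> / real d * ln (l i))" using rows by simp
      finally show ?thesis by (simp add: sum_distrib_left)
    qed
    also have "(\<Sum>i<d. \<Sum>j<d. P i j / real d * ((1 - \<alpha>) * ln (m j))) = (1 - \<alpha>) / real d * (\<Sum>j<d. ln (m j))"
    proof -
      have "(\<Sum>i<d. \<Sum>j<d. P i j / real d * ((1 - \<alpha>) * ln (m j))) = (\<Sum>j<d. (\<Sum>i<d. P i j) * ((1 - \<alpha>) / real d * ln (m j)))"
        by (subst sum.swap, simp add: sum_distrib_right sum_divide_distrib)
      also have "\<dots> = (\<Sum>j<d. (1 - \<alpha>) / real d * ln (m j))" using cols by simp
      finally show ?thesis by (simp add: sum_distrib_left)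
    qed
    finally show ?thesis .
  qed
  ultimately have key: "ln (real d) + \<alpha> / real d * (\<Sum>i<d. ln (l i)) + (1 - \<alpha>) / real d * (\<Sum>j<d. ln (m j)) \<le> ln T"
    by simp
  have lnb: "ln b > 0" using assms(1) by simp
  have lr: "ln (Re (det \<rho>)) = (\<Sum>i<d. ln (l i))" unfolding detr using lpos by (subst ln_prod, auto)
  have ls: "ln (Re (det \<sigma>)) = (\<Sum>i<d. ln (m i))" unfolding dets using mpos by (subst ln_prod, auto)
  have "log b (real d) + \<alpha> / real d * log b (Re (det \<rho>)) + (1 - \<alpha>) / real d * log b (Re (det \<sigma>))
      = (ln (real d) + \<alpha> / real d * (\<Sum>i<d. ln (l i)) + (1 - \<alpha>) / real d * (\<Sum>j<d. ln (m j))) / ln b"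
    unfolding log_def lr ls using lnb d0 by (simp add: field_simps)
  also have "\<dots> \<le> ln T / ln b" using key lnb by (simp add: divide_right_mono)
  also have "\<dots> = log b T" unfolding log_def ..
  finally have "log b (real d) + \<alpha> / real d * log b (Re (det \<rho>)) + (1 - \<alpha>) / real d * log b (Re (det \<sigma>)) \<le> log b T" .
  moreover have "1 / (\<alpha> - 1) \<ge> 0" using assms(6) by simp
  ultimately show ?thesis unfolding renyi_def T_def[symmetric] by (rule mult_left_mono)
qed

end
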